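(* Let $\mathcal{X}$ be an SP such that either $0$ is an absorbing state for $\mathcal{X}$ or there exists a supermartingale deflator $Y$ for $\mathcal{X}$ with $\{Y=0\}\subseteq\{X=0\}$ for all $X\in\mathcal{X}$, and let $\widetilde{T}$ be the $P$-a.s. unique stopping time such that $X=XI_{\llbracket 0,\widetilde{T}\llbracket}$ $P$-a.s. for all $X\in\mathcal{X}$ and such that there is a sequence $(\hat X^n)_{n\in\mathbb N}\subseteq\mathcal X$ with $\hat{T}^n:=\inf\{t\ge0:\hat{X}^n_t=0\}\nearrow\widetilde{T}$. Let $\tilde{\tau}:\Omega\to(0,\infty]$ be a random time such that for all $0\le s<t\le\infty$ with $P[\tilde{\tau}\in(s,t]]>0$, writing $Q^{(s,t)}:=P[\,\cdot\,|\,\tilde{\tau}\in(s,t]]$, there exists $\hat{X}^{(s,t)}\in\mathcal{X}$ which is strictly positive on $[0,s]$ $Q^{(s,t)}$-a.s., and every $X\in\mathcal{X}$ is zero on $[t,\infty)$ $Q^{(s,t)}$-a.s. Then $\tilde{\tau}=\widetilde{T}$ $P$-a.s.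
   Context: Work on a filtered probability space $(\Omega,\mathcal{F},\mathbb{F},P)$, $\mathbb{F}=(\mathcal{F}_t)_{t\ge0}$ satisfying the usual conditions, $\mathcal{F}_0$ trivial; convention $0/0=1$. $\llbracket 0,\tau\llbracket=\{(\omega,t)\in\Omega\times[0,\infty):0\le t<\tau(\omega)\}$; the interval $(s,\infty]$ includes $\infty$. A set of processes (SP) is a set $\mathcal{X}$ of processes such that: (A) each $X\in\mathcal{X}$ is an adapted, nonnegative, $P$-a.s. right-continuous process on $[0,\infty)$ with $X_0=1$; (C) for $X,X'\in\mathcal{X}$ and $\alpha\in[0,1]$, $(1-\alpha)X+\alpha X'\in\mathcal{X}$; (D) for all $t\in[0,\infty)$, $A\in\mathcal{F}_t$, $X\in\mathcal{X}$ and $X'\in\mathcal{X}$ with $\{X'_t=0\}\subseteq\{X_t=0\}$ on $A$, the process $I_{A^c}X_\cdot + I_A (X_{t\wedge\cdot}/X'_t)X'_{t\vee\cdot}$ belongs to $\mathcal{X}$. $0$ is an absorbing state if $\{X_s=0\}\subseteq\{X_t=0\}$ for every $X\in\mathcal{X}$ and $0\le s<t<\infty$. A supermartingale deflator for $\mathcal{X}$ is a process $Y$ with $XY$ a supermartingale for every $X\in\mathcal{X}$. *)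

theory Defs
  imports "HOL-Probability.Probability"
begin

type_synonym 'a proc = "real \<Rightarrow> 'a \<Rightarrow> real"

definition usual_filtration :: "'a measure \<Rightarrow> (real \<Rightarrow> 'a measure) \<Rightarrow> bool" where
  "usual_filtration M F \<longleftrightarrow>
     (\<forall>t\<ge>0. subalgebra M (F t)) \<and>
     (\<forall>s t. 0 \<le> s \<and> s \<le> t \<longrightarrow> sets (F s) \<subseteq> sets (F t)) \<and>
     (\<forall>t\<ge>0. sets (F t) = (\<Inter>u\<in>{t<..}. sets (F u))) \<and>
     (\<forall>A B. A \<subseteq> B \<and> B \<in> null_sets M \<longrightarrow> A \<in> sets M) \<and>
     (\<forall>N\<in>null_sets M. N \<in> sets (F 0)) \<and>
     (\<forall>A\<in>sets (F 0). emeasure M A = 0 \<or> emeasure M A = 1)"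

definition adapted :: "(real \<Rightarrow> 'a measure) \<Rightarrow> 'a proc \<Rightarrow> bool" where
  "adapted F X \<longleftrightarrow> (\<forall>t\<ge>0. X t \<in> borel_measurable (F t))"

definition stopping_time_F :: "'a measure \<Rightarrow> (real \<Rightarrow> 'a measure) \<Rightarrow> ('a \<Rightarrow> ennreal) \<Rightarrow> bool" where
  "stopping_time_F M F T \<longleftrightarrow>
     (\<forall>t\<ge>0. {\<omega>\<in>space M. T \<omega> \<le> ennreal t} \<in> sets (F t))"

definition div01 :: "real \<Rightarrow> real \<Rightarrow> real" where
  "div01 a b = (if a = 0 \<and> b = 0 then 1 else a / b)"

text \<open>The process I_{A^c} X + I_A (X_{t\<and>.}/X'_t) X'_{t\<or>.}: it equals X up to time t
and (X_t/X'_t) X'_s for s > t on A.\<close>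
definition paste :: "real \<Rightarrow> 'a set \<Rightarrow> 'a proc \<Rightarrow> 'a proc \<Rightarrow> 'a proc" where
  "paste t A X X' = (\<lambda>s \<omega>. if \<omega> \<in> A then (if s \<le> t then X s \<omega> else div01 (X t \<omega>) (X' t \<omega>) * X' s \<omega>)
                            else X s \<omega>)"

definition SP :: "'a measure \<Rightarrow> (real \<Rightarrow> 'a measure) \<Rightarrow> 'a proc set \<Rightarrow> bool" where
  "SP M F \<X> \<longleftrightarrow>
     (\<forall>X\<in>\<X>. adapted F X \<and> (\<forall>t\<ge>0. \<forall>\<omega>\<in>space M. X t \<omega> \<ge> 0) \<and>
        (AE \<omega> in M. \<forall>t\<ge>0. continuous (at_right t) (\<lambda>s. X s \<omega>)) \<and>
        (\<forall>\<omega>\<in>space M. X 0 \<omega> = 1)) \<and>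
     (\<forall>X\<in>\<X>. \<forall>X'\<in>\<X>. \<forall>\<alpha>::real. 0 \<le> \<alpha> \<and> \<alpha> \<le> 1 \<longrightarrow>
        (\<lambda>t \<omega>. (1 - \<alpha>) * X t \<omega> + \<alpha> * X' t \<omega>) \<in> \<X>) \<and>
     (\<forall>t\<ge>0. \<forall>A\<in>sets (F t). \<forall>X\<in>\<X>. \<forall>X'\<in>\<X>.
        (\<forall>\<omega>\<in>A. X' t \<omega> = 0 \<longrightarrow> X t \<omega> = 0) \<longrightarrow> paste t A X X' \<in> \<X>)"

definition absorbing_zero :: "'a measure \<Rightarrow> 'a proc set \<Rightarrow> bool" where
  "absorbing_zero M \<X> \<longleftrightarrow>
     (\<forall>X\<in>\<X>. \<forall>s t. 0 \<le> s \<and> s < t \<longrightarrow>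
        {\<omega>\<in>space M. X s \<omega> = 0} \<subseteq> {\<omega>\<in>space M. X t \<omega> = 0})"

definition supermartingale_F :: "'a measure \<Rightarrow> (real \<Rightarrow> 'a measure) \<Rightarrow> 'a proc \<Rightarrow> bool" where
  "supermartingale_F M F Z \<longleftrightarrow>
     adapted F Z \<and> (\<forall>t\<ge>0. integrable M (Z t)) \<and>
     (\<forall>s t. 0 \<le> s \<and> s \<le> t \<longrightarrow> (AE \<omega> in M. real_cond_exp M (F s) (Z t) \<omega> \<le> Z s \<omega>))"

definition supermartingale_deflator :: "'a measure \<Rightarrow> (real \<Rightarrow> 'a measure) \<Rightarrow> 'a proc set \<Rightarrow> 'a proc \<Rightarrow> bool" where
  "supermartingale_deflator M F \<X> Y \<longleftrightarrow>
     (\<forall>X\<in>\<X>. supermartingale_F M F (\<lambda>t \<omega>. X t \<omega> * Y t \<omega>))"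

text \<open>First hitting time of zero, inf {t \<ge> 0. X_t = 0} (inf of the empty set is \<infinity>).\<close>
definition hit0 :: "'a proc \<Rightarrow> 'a \<Rightarrow> ennreal" where
  "hit0 X \<omega> = Inf (ennreal ` {t. 0 \<le> t \<and> X t \<omega> = 0})"

end

theory Submission
  imports Defs
begin

lemma part1:
  fixes M :: "'a measure" and \<X> :: "'a proc set"
    and Tt :: "'a \<Rightarrow> ennreal" and \<tau> :: "'a \<Rightarrow> ennreal" and r :: real
  assumes P: "prob_space M"
    and Xh: "\<forall>n. Xh n \<in> \<X>"
    and conv: "AE \<omega> in M. (\<lambda>n. hit0 (Xh n) \<omega>) \<longlonglongrightarrow> Tt \<omega>"
    and meas: "\<tau> \<in> borel_measurable M"
    and pos: "\<forall>\<omega>\<in>space M. \<tau> \<omega> > 0"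
    and r: "r > 0"
    and H: "\<forall>(s::real) (t::ennreal). 0 \<le> s \<and> ennreal s < t \<and>
           measure M {\<omega>\<in>space M. ennreal s < \<tau> \<omega> \<and> \<tau> \<omega> \<le> t} > 0 \<longrightarrow>
           (let Q = uniform_measure M {\<omega>\<in>space M. ennreal s < \<tau> \<omega> \<and> \<tau> \<omega> \<le> t} in
             (\<exists>Xh\<in>\<X>. AE \<omega> in Q. \<forall>u. 0 \<le> u \<and> u \<le> s \<longrightarrow> Xh u \<omega> > 0) \<and>
             (\<forall>X\<in>\<X>. AE \<omega> in Q. \<forall>u. 0 \<le> u \<and> t \<le> ennreal u \<longrightarrow> X u \<omega> = 0))"
  shows "AE \<omega> in M. \<tau> \<omega> \<le> ennreal r \<longrightarrow> Tt \<omega> \<le> ennreal r"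
proof -
  interpret prob_space M by fact
  define A where "A = {\<omega>\<in>space M. ennreal 0 < \<tau> \<omega> \<and> \<tau> \<omega> \<le> ennreal r}"
  have Asets: "A \<in> sets M" unfolding A_def using meas by measurable
  show ?thesis
  proof (cases "measure M A > 0")
    case False
    then have "measure M A = 0" using measure_nonneg[of M A] by linarith
    then have "A \<in> null_sets M" using Asets by (simp add: emeasure_eq_measure null_setsI)
    then have "AE \<omega> in M. \<omega> \<notin> A" by (rule AE_not_in)
    with AE_space show ?thesis
    proof eventually_elim
      case (elim \<omega>)
      then show ?case using pos[rule_format, of \<omega>] unfolding A_def by auto
    qed
  next
    case True
    have "ennreal 0 < ennreal r" using r by simp
    have "0 \<le> (0::real) \<and> ennreal 0 < ennreal r \<and>
           measure M {\<omega>\<in>space M. ennreal 0 < \<tau> \<omega> \<and> \<tau> \<omega> \<le> ennreal r} > 0"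
      using True \<open>ennreal 0 < ennreal r\<close> unfolding A_def by simp
    from H[rule_format, OF this]
    have "\<forall>X\<in>\<X>. AE \<omega> in uniform_measure M A. \<forall>u. 0 \<le> u \<and> ennreal r \<le> ennreal u \<longrightarrow> X u \<omega> = 0"
      unfolding A_def Let_def by (rule conjunct2)
    with Xh have "\<forall>n. AE \<omega> in uniform_measure M A. \<forall>u. 0 \<le> u \<and> ennreal r \<le> ennreal u \<longrightarrow> Xh n u \<omega> = 0"
      by blast
    then have a1: "AE \<omega> in uniform_measure M A. \<forall>n. \<forall>u. 0 \<le> u \<and> ennreal r \<le> ennreal u \<longrightarrow> Xh n u \<omega> = 0"
      by (simp add: AE_all_countable)
    have a2: "AE \<omega> in uniform_measure M A. (\<lambda>n. hit0 (Xh n) \<omega>) \<longlonglongrightarrow> Tt \<omega>"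
      using Asets conv by (auto intro!: AE_uniform_measureI elim: AE_mp)
    have "AE \<omega> in uniform_measure M A. Tt \<omega> \<le> ennreal r"
      using a1 a2
    proof eventually_elim
      case (elim \<omega>)
      have "\<And>n. hit0 (Xh n) \<omega> \<le> ennreal r"
        unfolding hit0_def using elim(1) r by (auto intro!: Inf_lower)
      then show ?case using elim(2) by (meson LIMSEQ_le_const2)
    qed
    moreover have "emeasure M A \<noteq> 0" "emeasure M A < \<infinity>"
      using True by (auto simp: emeasure_eq_measure)
    ultimately have "AE \<omega> in M. \<omega> \<in> A \<longrightarrow> Tt \<omega> \<le> ennreal r"
      by (simp add: AE_uniform_measure[symmetric])
    with AE_space show ?thesis
    proof eventually_elim
      case (elim \<omega>)
      then show ?case using pos[rule_format, of \<omega>] unfolding A_def by auto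
    qed
  qed
qed
lemma part2:
  fixes M :: "'a measure" and \<X> :: "'a proc set"
    and Tt :: "'a \<Rightarrow> ennreal" and \<tau> :: "'a \<Rightarrow> ennreal" and r :: real
  assumes P: "prob_space M"
    and Z: "\<forall>X\<in>\<X>. AE \<omega> in M. \<forall>t\<ge>0. X t \<omega> = (if ennreal t < Tt \<omega> then X t \<omega> else 0)"
    and meas: "\<tau> \<in> borel_measurable M"
    and r: "r > 0"
    and H: "\<forall>(s::real) (t::ennreal). 0 \<le> s \<and> ennreal s < t \<and>
           measure M {\<omega>\<in>space M. ennreal s < \<tau> \<omega> \<and> \<tau> \<omega> \<le> t} > 0 \<longrightarrow>
           (let Q = uniform_measure M {\<omega>\<in>space M. ennreal s < \<tau> \<omega> \<and> \<tau> \<omega> \<le> t} in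
             (\<exists>Xh\<in>\<X>. AE \<omega> in Q. \<forall>u. 0 \<le> u \<and> u \<le> s \<longrightarrow> Xh u \<omega> > 0) \<and>
             (\<forall>X\<in>\<X>. AE \<omega> in Q. \<forall>u. 0 \<le> u \<and> t \<le> ennreal u \<longrightarrow> X u \<omega> = 0))"
  shows "AE \<omega> in M. ennreal r < \<tau> \<omega> \<longrightarrow> ennreal r < Tt \<omega>"
proof -
  interpret prob_space M by fact
  define A where "A = {\<omega>\<in>space M. ennreal r < \<tau> \<omega> \<and> \<tau> \<omega> \<le> \<top>}"
  have Asets: "A \<in> sets M" unfolding A_def using meas by measurable
  show ?thesis
  proof (cases "measure M A > 0")
    case False
    then have "measure M A = 0" using measure_nonneg[of M A] by linarith
    then have "A \<in> null_sets M" using Asets by (simp add: emeasure_eq_measure null_setsI)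
    then have "AE \<omega> in M. \<omega> \<notin> A" by (rule AE_not_in)
    with AE_space show ?thesis
    proof eventually_elim
      case (elim \<omega>)
      then show ?case unfolding A_def by auto
    qed
  next
    case True
    have "0 \<le> r \<and> ennreal r < \<top> \<and>
           measure M {\<omega>\<in>space M. ennreal r < \<tau> \<omega> \<and> \<tau> \<omega> \<le> \<top>} > 0"
      using True r unfolding A_def by simp
    from H[rule_format, OF this]
    have "\<exists>Xh\<in>\<X>. AE \<omega> in uniform_measure M A. \<forall>u. 0 \<le> u \<and> u \<le> r \<longrightarrow> Xh u \<omega> > 0"
      unfolding A_def Let_def by (rule conjunct1)
    then obtain Xh where Xh: "Xh \<in> \<X>"
      and a1: "AE \<omega> in uniform_measure M A. \<forall>u. 0 \<le> u \<and> u \<le> r \<longrightarrow> Xh u \<omega> > 0" by blast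
    have a2: "AE \<omega> in uniform_measure M A. \<forall>t\<ge>0. Xh t \<omega> = (if ennreal t < Tt \<omega> then Xh t \<omega> else 0)"
      using Asets Z Xh by (auto intro!: AE_uniform_measureI elim: AE_mp)
    have "AE \<omega> in uniform_measure M A. ennreal r < Tt \<omega>"
      using a1 a2
    proof eventually_elim
      case (elim \<omega>)
      have "Xh r \<omega> > 0" using elim(1) r by simp
      moreover have "Xh r \<omega> = (if ennreal r < Tt \<omega> then Xh r \<omega> else 0)" using elim(2) r by simp
      ultimately show ?case by (metis less_irrefl)
    qed
    moreover have "emeasure M A \<noteq> 0" "emeasure M A < \<infinity>"
      using True by (auto simp: emeasure_eq_measure)
    ultimately have "AE \<omega> in M. \<omega> \<in> A \<longrightarrow> ennreal r < Tt \<omega>"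
      by (simp add: AE_uniform_measure[symmetric])
    with AE_space show ?thesis
    proof eventually_elim
      case (elim \<omega>)
      then show ?case unfolding A_def by auto
    qed
  qed
qed

theorem propositionA9:
  fixes M :: "'a measure" and F :: "real \<Rightarrow> 'a measure" and \<X> :: "'a proc set"
    and Tt :: "'a \<Rightarrow> ennreal" and \<tau> :: "'a \<Rightarrow> ennreal"
  assumes "prob_space M"
    and "usual_filtration M F"
    and "SP M F \<X>"
    and "absorbing_zero M \<X> \<or>
         (\<exists>Y. supermartingale_deflator M F \<X> Y \<and>
              (\<forall>X\<in>\<X>. \<forall>t\<ge>0. \<forall>\<omega>\<in>space M. Y t \<omega> = 0 \<longrightarrow> X t \<omega> = 0))"
    and "stopping_time_F M F Tt"
    and "\<forall>X\<in>\<X>. AE \<omega> in M. \<forall>t\<ge>0. X t \<omega> = (if ennreal t < Tt \<omega> then X t \<omega> else 0)"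
    and "\<exists>Xh :: nat \<Rightarrow> 'a proc. (\<forall>n. Xh n \<in> \<X>) \<and>
           (AE \<omega> in M. incseq (\<lambda>n. hit0 (Xh n) \<omega>) \<and> (\<lambda>n. hit0 (Xh n) \<omega>) \<longlonglongrightarrow> Tt \<omega>)"
    and "\<tau> \<in> borel_measurable M"
    and "\<forall>\<omega>\<in>space M. \<tau> \<omega> > 0"
    and "\<forall>(s::real) (t::ennreal). 0 \<le> s \<and> ennreal s < t \<and>
           measure M {\<omega>\<in>space M. ennreal s < \<tau> \<omega> \<and> \<tau> \<omega> \<le> t} > 0 \<longrightarrow>
           (let Q = uniform_measure M {\<omega>\<in>space M. ennreal s < \<tau> \<omega> \<and> \<tau> \<omega> \<le> t} in
             (\<exists>Xh\<in>\<X>. AE \<omega> in Q. \<forall>u. 0 \<le> u \<and> u \<le> s \<longrightarrow> Xh u \<omega> > 0) \<and>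
             (\<forall>X\<in>\<X>. AE \<omega> in Q. \<forall>u. 0 \<le> u \<and> t \<le> ennreal u \<longrightarrow> X u \<omega> = 0))"
  shows "AE \<omega> in M. \<tau> \<omega> = Tt \<omega>"
proof -
  interpret prob_space M by fact
  obtain Xh :: "nat \<Rightarrow> 'a proc" where Xh: "\<forall>n. Xh n \<in> \<X>"
    and conv0: "AE \<omega> in M. incseq (\<lambda>n. hit0 (Xh n) \<omega>) \<and> (\<lambda>n. hit0 (Xh n) \<omega>) \<longlonglongrightarrow> Tt \<omega>"
    using assms(7) by blast
  have conv: "AE \<omega> in M. (\<lambda>n. hit0 (Xh n) \<omega>) \<longlonglongrightarrow> Tt \<omega>"
    using conv0 by (auto elim: AE_mp)
  have "\<forall>q::rat. AE \<omega> in M. real_of_rat q > 0 \<longrightarrow>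
      ((\<tau> \<omega> \<le> ennreal (real_of_rat q) \<longrightarrow> Tt \<omega> \<le> ennreal (real_of_rat q)) \<and>
       (ennreal (real_of_rat q) < \<tau> \<omega> \<longrightarrow> ennreal (real_of_rat q) < Tt \<omega>))"
  proof
    fix q :: rat
    show "AE \<omega> in M. real_of_rat q > 0 \<longrightarrow>
      ((\<tau> \<omega> \<le> ennreal (real_of_rat q) \<longrightarrow> Tt \<omega> \<le> ennreal (real_of_rat q)) \<and>
       (ennreal (real_of_rat q) < \<tau> \<omega> \<longrightarrow> ennreal (real_of_rat q) < Tt \<omega>))"
    proof (cases "real_of_rat q > 0")
      case True
      have 1: "AE \<omega> in M. \<tau> \<omega> \<le> ennreal (real_of_rat q) \<longrightarrow> Tt \<omega> \<le> ennreal (real_of_rat q)"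
        by (rule part1[OF assms(1) Xh conv assms(8) assms(9) True assms(10)])
      have 2: "AE \<omega> in M. ennreal (real_of_rat q) < \<tau> \<omega> \<longrightarrow> ennreal (real_of_rat q) < Tt \<omega>"
        by (rule part2[OF assms(1) assms(6) assms(8) True assms(10)])
      from 1 2 show ?thesis by eventually_elim auto
    qed simp
  qed
  then have "AE \<omega> in M. \<forall>q::rat. real_of_rat q > 0 \<longrightarrow>
      ((\<tau> \<omega> \<le> ennreal (real_of_rat q) \<longrightarrow> Tt \<omega> \<le> ennreal (real_of_rat q)) \<and>
       (ennreal (real_of_rat q) < \<tau> \<omega> \<longrightarrow> ennreal (real_of_rat q) < Tt \<omega>))"
    by (simp add: AE_all_countable)
  with AE_space show ?thesis
  proof eventually_elim
    case (elim \<omega>)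
    have pos: "\<tau> \<omega> > 0" using assms(9) elim(1) by blast
    show ?case
    proof (rule ccontr)
      assume "\<tau> \<omega> \<noteq> Tt \<omega>"
      then consider "\<tau> \<omega> < Tt \<omega>" | "Tt \<omega> < \<tau> \<omega>" by (meson linorder_neqE)
      then show False
      proof cases
        case 1
        then obtain q :: rat where q: "\<tau> \<omega> < ennreal (real_of_rat q)" "ennreal (real_of_rat q) < Tt \<omega>"
          using ennreal_rat_dense by blast
        have "ennreal (real_of_rat q) > 0" using q(1) pos by order
        then have "real_of_rat q > 0" by simp
        then show False using elim(2) q by (meson leD less_imp_le)
      next
        case 2
        then obtain q :: rat where q: "Tt \<omega> < ennreal (real_of_rat q)" "ennreal (real_of_rat q) < \<tau> \<omega>"
          using ennreal_rat_dense by blast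
        have "ennreal (real_of_rat q) > 0" using q(1) by (metis zero_le order.strict_trans1)
        then have "real_of_rat q > 0" by simp
        then show False using elim(2) q by (meson leD less_imp_le)
      qed
    qed
  qed
qed

end
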